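(* Let $n\ge 2$ and $1\le i<n$ be integers with $\gcd(n,i)=1$, let $J_n=\sum_{j=1}^{n-1}E_{j,j+1}\in M_n(\mathbb{C})$, and put $A_n=J_n^i$, $B_n=(J_n^T)^{n-i}$. Define $$\mathcal W(n,i)=\begin{cases}\mathcal V(n-2i)\oplus\mathcal V(-2i), & 2i<n,\\ \mathcal V(n-2i)\oplus\mathcal V(2n-2i), & 2i>n,\\ \mathcal V(0), & i=1,\ n=2.\end{cases}$$ Then the linear span of all words of length exactly $n-2$ in $A_n$ and $B_n$ is contained in $\mathcal W(n,i)$ and is a proper subspace of $\mathcal W(n,i)$.
   Context: For $k\in\{-(n-1),\dots,n-1\}$, the $k$-diagonal of $A=(a_{ij})\in M_n(\mathbb{C})$ consists of the entries $a_{j,j+k}$, and $\mathcal V(k)$ denotes the subspace of $M_n(\mathbb{C})$ of matrices all of whose nonzero entries lie on the $k$-diagonal. A word of length $m$ in $A_n,B_n$ is a product of $m$ factors each equal to $A_n$ or $B_n$; the word of length $0$ is $I_n$. $E_{i,j}$ is the matrix unit. *)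

theory Defs
  imports "Jordan_Normal_Form.Matrix" "HOL-Computational_Algebra.Primes"
begin

(* J_n = sum_{j=1}^{n-1} E_{j,j+1}; 0-based: entry (r,c) is 1 iff c = r+1 *)
definition Jn :: "nat \<Rightarrow> complex mat" where
  "Jn n = mat n n (\<lambda>(r,c). if c = r + 1 then 1 else 0)"

definition An :: "nat \<Rightarrow> nat \<Rightarrow> complex mat" where
  "An n i = Jn n ^\<^sub>m i"

definition Bn :: "nat \<Rightarrow> nat \<Rightarrow> complex mat" where
  "Bn n i = transpose_mat (Jn n) ^\<^sub>m (n - i)"

definition word_mat :: "nat \<Rightarrow> complex mat \<Rightarrow> complex mat \<Rightarrow> bool list \<Rightarrow> complex mat" where
  "word_mat n A B w = foldr (\<lambda>b M. (if b then A else B) * M) w (1\<^sub>m n)"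

definition words_len :: "nat \<Rightarrow> complex mat \<Rightarrow> complex mat \<Rightarrow> nat \<Rightarrow> complex mat set" where
  "words_len n A B m = {word_mat n A B w | w. length w = m}"

definition span_mats :: "nat \<Rightarrow> complex mat set \<Rightarrow> complex mat set" where
  "span_mats n S = {foldr (\<lambda>(c, X) acc. c \<cdot>\<^sub>m X + acc) L (0\<^sub>m n n) | L. set (map snd L) \<subseteq> S}"

definition diagV :: "nat \<Rightarrow> int \<Rightarrow> complex mat set" where
  "diagV n k = {M \<in> carrier_mat n n. \<forall>r<n. \<forall>c<n. M $$ (r,c) \<noteq> 0 \<longrightarrow> int c = int r + k}"

definition sum_space :: "complex mat set \<Rightarrow> complex mat set \<Rightarrow> complex mat set" where
  "sum_space U V = {M + N | M N. M \<in> U \<and> N \<in> V}"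

definition W_space :: "nat \<Rightarrow> nat \<Rightarrow> complex mat set" where
  "W_space n i =
     (if 2 * i < n then sum_space (diagV n (int n - 2 * int i)) (diagV n (- 2 * int i))
      else if 2 * i > n then sum_space (diagV n (int n - 2 * int i)) (diagV n (2 * int n - 2 * int i))
      else diagV n 0)"

end

theory Submission imports Defs begin

lemma Jn_carrier[simp]: "Jn n \<in> carrier_mat n n" by (simp add: Jn_def)
lemma Jn_dim[simp]: "dim_row (Jn n) = n" "dim_col (Jn n) = n" by (simp_all add: Jn_def)

lemma Jpow: "r < n \<Longrightarrow> c < n \<Longrightarrow> (Jn n ^\<^sub>m k) $$ (r,c) = (if c = r + k then 1 else 0)"
proof (induction k arbitrary: c)
  case 0 then show ?case by (simp add: Jn_def)
next
  case (Suc k)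
  have "(Jn n ^\<^sub>m Suc k) $$ (r,c) = (\<Sum>m\<in>{0..<n}. (Jn n ^\<^sub>m k) $$ (r,m) * Jn n $$ (m,c))"
    using Suc.prems by (simp add: scalar_prod_def)
  also have "\<dots> = (\<Sum>m\<in>{0..<n}. if m = r + k then (if c = m + 1 then 1 else 0) else 0)"
    using Suc by (intro sum.cong) (auto simp: Jn_def)
  also have "\<dots> = (if c = r + Suc k then 1 else 0)"
    using Suc.prems by (auto simp: sum.delta')
  finally show ?case .
qed

lemma JTpow: "r < n \<Longrightarrow> c < n \<Longrightarrow> (transpose_mat (Jn n) ^\<^sub>m k) $$ (r,c) = (if r = c + k then 1 else 0)"
proof (induction k arbitrary: c)
  case 0 then show ?case by (simp add: Jn_def)
next
  case (Suc k)
  have "(transpose_mat (Jn n) ^\<^sub>m Suc k) $$ (r,c) = (\<Sum>m\<in>{0..<n}. (transpose_mat (Jn n) ^\<^sub>m k) $$ (r,m) * transpose_mat (Jn n) $$ (m,c))"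
    using Suc.prems by (simp add: scalar_prod_def)
  also have "\<dots> = (\<Sum>m\<in>{0..<n}. if r = m + k then (if m = c + 1 then 1 else 0) else 0)"
    using Suc by (intro sum.cong) (auto simp: Jn_def)
  also have "\<dots> = (\<Sum>m\<in>{0..<n}. if m = c + 1 then (if r = m + k then 1 else 0) else 0)"
    by (intro sum.cong) auto
  also have "\<dots> = (if r = c + Suc k then 1 else 0)"
    using Suc.prems by (auto simp: sum.delta')
  finally show ?case .
qed


fun pth :: "nat \<Rightarrow> nat \<Rightarrow> int \<Rightarrow> bool list \<Rightarrow> int option" where
  "pth n i x [] = Some x"
| "pth n i x (b#w) = (let y = x + (if b then int i else int i - int n) in
      if 0 \<le> y \<and> y < int n then pth n i y w else None)"

lemma An_carrier[simp]: "An n i \<in> carrier_mat n n" by (simp add: An_def)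
lemma Bn_carrier[simp]: "Bn n i \<in> carrier_mat n n" by (simp add: Bn_def)
lemma An_dim[simp]: "dim_row (An n i) = n" "dim_col (An n i) = n" using An_carrier[of n i] unfolding carrier_mat_def by auto
lemma Bn_dim[simp]: "dim_row (Bn n i) = n" "dim_col (Bn n i) = n" using Bn_carrier[of n i] unfolding carrier_mat_def by auto

lemma word_carrier: "word_mat n (An n i) (Bn n i) w \<in> carrier_mat n n"
  by (induction w) (auto simp: word_mat_def intro!: mult_carrier_mat[of _ n n _ n])

lemma word_entry:
  assumes "i \<le> n"
  shows "r < n \<Longrightarrow> c < n \<Longrightarrow> word_mat n (An n i) (Bn n i) w $$ (r,c)
     = (if pth n i (int r) w = Some (int c) then 1 else 0)"
proof (induction w arbitrary: r)
  case Nil then show ?case by (simp add: word_mat_def)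
next
  case (Cons b w)
  let ?M = "word_mat n (An n i) (Bn n i) w"
  have Mc: "?M \<in> carrier_mat n n" by (rule word_carrier)
  have wm: "word_mat n (An n i) (Bn n i) (b#w) = (if b then An n i else Bn n i) * ?M"
    by (simp add: word_mat_def)
  show ?case
  proof (cases b)
    case True
    have "word_mat n (An n i) (Bn n i) (b#w) $$ (r,c) = (\<Sum>m\<in>{0..<n}. An n i $$ (r,m) * ?M $$ (m,c))"
      using Cons.prems Mc True wm by (simp add: scalar_prod_def carrier_matD)
    also have "\<dots> = (\<Sum>m\<in>{0..<n}. if m = r + i then ?M $$ (m,c) else 0)"
      using Cons.prems by (intro sum.cong) (auto simp: An_def Jpow)
    also have "\<dots> = (if r + i < n then ?M $$ (r+i,c) else 0)"
      by (simp add: sum.delta')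
    also have "\<dots> = (if pth n i (int r) (b#w) = Some (int c) then 1 else 0)"
      using Cons True by (auto simp: Let_def)
    finally show ?thesis .
  next
    case False
    have "word_mat n (An n i) (Bn n i) (b#w) $$ (r,c) = (\<Sum>m\<in>{0..<n}. Bn n i $$ (r,m) * ?M $$ (m,c))"
      using Cons.prems Mc False wm by (simp add: scalar_prod_def carrier_matD)
    also have "\<dots> = (\<Sum>m\<in>{0..<n}. if m = r - (n - i) then (if n - i \<le> r then ?M $$ (m,c) else 0) else 0)"
      using Cons.prems by (intro sum.cong) (auto simp: Bn_def JTpow)
    also have "\<dots> = (if n - i \<le> r then ?M $$ (r - (n-i),c) else 0)"
      using Cons.prems by (simp add: sum.delta')
    also have "\<dots> = (if pth n i (int r) (b#w) = Some (int c) then 1 else 0)"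
    proof -
      have "int r + int i - int n = int (r - (n-i))" if "n - i \<le> r" using that assms by simp
      then show ?thesis
      using Cons False assms by (auto simp: Let_def add_diff_eq)
    qed
    finally show ?thesis .
  qed
qed


lemma pth_end: "pth n i x w = Some y \<Longrightarrow> y = x + int (length w) * int i - int (length (filter Not w)) * int n"
proof (induction w arbitrary: x)
  case Nil then show ?case by simp
next
  case (Cons b w)
  then have "pth n i (x + (if b then int i else int i - int n)) w = Some y"
    by (auto simp: Let_def split: if_splits)
  from Cons.IH[OF this] show ?case by (cases b) (simp_all add: algebra_simps)
qed

lemma pth_pair:
  assumes "i < n"
  shows "0 \<le> x \<Longrightarrow> x + 1 < int n \<Longrightarrow> (\<forall>t<length w. (x + int t * int i) mod int n \<noteq> int n - int i - 1)
    \<Longrightarrow> pth n i (x+1) w = map_option (\<lambda>y. y+1) (pth n i x w)"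
proof (induction w arbitrary: x)
  case Nil then show ?case by simp
next
  case (Cons b w)
  have "x mod int n \<noteq> int n - int i - 1" using Cons.prems(3) by force
  moreover have "x mod int n = x" using Cons.prems by simp
  ultimately have xne: "x \<noteq> int n - int i - 1" by simp
  define y where "y = x + (if b then int i else int i - int n)"
  have y1: "y + 1 = (x + 1) + (if b then int i else int i - int n)" by (simp add: y_def)
  have valid: "(0 \<le> y + 1 \<and> y + 1 < int n) = (0 \<le> y \<and> y < int n)"
    using xne Cons.prems assms by (auto simp: y_def)
  have hyp: "\<forall>t<length w. (y + int t * int i) mod int n \<noteq> int n - int i - 1"
  proof (intro allI impI)
    fix t assume t: "t < length w"
    have "(y + int t * int i) mod int n = (x + int (Suc t) * int i) mod int n"
    proof (cases b)
      case True then show ?thesis by (simp add: y_def algebra_simps)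
    next
      case False
      have "y + int t * int i = (x + int (Suc t) * int i) + (-1) * int n"
        using False by (simp add: y_def algebra_simps)
      then show ?thesis by (metis mod_mult_self1 mult.commute)
    qed
    then show "(y + int t * int i) mod int n \<noteq> int n - int i - 1"
      using Cons.prems(3) t by auto
  qed
  have e1: "pth n i (x+1) (b#w) = (if 0 \<le> y+1 \<and> y+1 < int n then pth n i (y+1) w else None)"
    by (simp only: pth.simps Let_def y1)
  have e2: "pth n i x (b#w) = (if 0 \<le> y \<and> y < int n then pth n i y w else None)"
    by (simp only: pth.simps Let_def y_def)
  show ?case
  proof (cases "0 \<le> y \<and> y < int n")
    case True
    then have "0 \<le> y" "y + 1 < int n" using valid by auto
    then have "pth n i (y+1) w = map_option (\<lambda>y. y+1) (pth n i y w)"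
      using Cons.IH hyp by blast
    then show ?thesis using True valid by (simp only: e1 e2) simp
  next
    case False
    then show ?thesis using valid by (simp only: e1 e2) simp
  qed
qed


definition closedsp :: "nat \<Rightarrow> complex mat set \<Rightarrow> bool" where
  "closedsp n S \<longleftrightarrow> 0\<^sub>m n n \<in> S \<and> S \<subseteq> carrier_mat n n \<and> (\<forall>X\<in>S. \<forall>Y\<in>S. X + Y \<in> S) \<and> (\<forall>c. \<forall>X\<in>S. c \<cdot>\<^sub>m X \<in> S)"

lemma closed_diagV: "closedsp n (diagV n k)"
  unfolding closedsp_def diagV_def
proof (intro conjI ballI allI subsetI)
  fix X Y :: "complex mat" assume X: "X \<in> {M \<in> carrier_mat n n. \<forall>r<n. \<forall>c<n. M $$ (r, c) \<noteq> 0 \<longrightarrow> int c = int r + k}"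
    and Y: "Y \<in> {M \<in> carrier_mat n n. \<forall>r<n. \<forall>c<n. M $$ (r, c) \<noteq> 0 \<longrightarrow> int c = int r + k}"
  have ent: "(X + Y) $$ (r,c) = X $$ (r,c) + Y $$ (r,c)" if "r < n" "c < n" for r c
    using that conjunct1[OF CollectD[OF Y]] by (simp add: carrier_matD)
  show "X + Y \<in> {M \<in> carrier_mat n n. \<forall>r<n. \<forall>c<n. M $$ (r, c) \<noteq> 0 \<longrightarrow> int c = int r + k}"
  proof (intro CollectI conjI allI impI)
    show "X + Y \<in> carrier_mat n n" using X Y by auto
    fix r c assume rc: "r < n" "c < n" "(X + Y) $$ (r, c) \<noteq> 0"
    then have "X $$ (r,c) \<noteq> 0 \<or> Y $$ (r,c) \<noteq> 0" using ent[OF rc(1,2)] by (metis add.right_neutral)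
    then show "int c = int r + k" using X Y rc(1,2) by blast
  qed
next
  fix a :: complex and X :: "complex mat" assume X: "X \<in> {M \<in> carrier_mat n n. \<forall>r<n. \<forall>c<n. M $$ (r, c) \<noteq> 0 \<longrightarrow> int c = int r + k}"
  have ent: "(a \<cdot>\<^sub>m X) $$ (r,c) = a * X $$ (r,c)" if "r < n" "c < n" for r c
    using that conjunct1[OF CollectD[OF X]] by (simp add: carrier_matD)
  show "a \<cdot>\<^sub>m X \<in> {M \<in> carrier_mat n n. \<forall>r<n. \<forall>c<n. M $$ (r, c) \<noteq> 0 \<longrightarrow> int c = int r + k}"
  proof (intro CollectI conjI allI impI)
    show "a \<cdot>\<^sub>m X \<in> carrier_mat n n" using X by auto
    fix r c assume rc: "r < n" "c < n" "(a \<cdot>\<^sub>m X) $$ (r, c) \<noteq> 0"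
    then have "X $$ (r,c) \<noteq> 0" using ent[OF rc(1,2)] by auto
    then show "int c = int r + k" using X rc(1,2) by blast
  qed
qed auto

lemma closed_sum_space:
  assumes "closedsp n U" "closedsp n V" shows "closedsp n (sum_space U V)"
proof -
  have U: "0\<^sub>m n n \<in> U" "U \<subseteq> carrier_mat n n" "\<And>X Y. X\<in>U \<Longrightarrow> Y\<in>U \<Longrightarrow> X + Y \<in> U" "\<And>c X. X\<in>U \<Longrightarrow> c \<cdot>\<^sub>m X \<in> U"
    using assms(1) unfolding closedsp_def by auto
  have V: "0\<^sub>m n n \<in> V" "V \<subseteq> carrier_mat n n" "\<And>X Y. X\<in>V \<Longrightarrow> Y\<in>V \<Longrightarrow> X + Y \<in> V" "\<And>c X. X\<in>V \<Longrightarrow> c \<cdot>\<^sub>m X \<in> V"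
    using assms(2) unfolding closedsp_def by auto
  show ?thesis unfolding closedsp_def sum_space_def
  proof (intro conjI ballI allI)
    show "0\<^sub>m n n \<in> {M + N |M N. M \<in> U \<and> N \<in> V}"
      using U V by (intro CollectI exI[of _ "0\<^sub>m n n"]) auto
    show "{M + N |M N. M \<in> U \<and> N \<in> V} \<subseteq> carrier_mat n n" using U V by auto
  next
    fix X Y assume "X \<in> {M + N |M N. M \<in> U \<and> N \<in> V}" "Y \<in> {M + N |M N. M \<in> U \<and> N \<in> V}"
    then obtain M1 N1 M2 N2 where h: "X = M1 + N1" "Y = M2 + N2" "M1 \<in> U" "M2 \<in> U" "N1 \<in> V" "N2 \<in> V" by blast
    then have c: "M1 \<in> carrier_mat n n" "M2 \<in> carrier_mat n n" "N1 \<in> carrier_mat n n" "N2 \<in> carrier_mat n n"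
      using U V by auto
    have "X + Y = (M1 + M2) + (N1 + N2)" unfolding h(1,2) using c by (intro eq_matI) (simp_all add: carrier_matD add_ac)
    moreover have "M1 + M2 \<in> U" "N1 + N2 \<in> V" using h U V by auto
    ultimately show "X + Y \<in> {M + N |M N. M \<in> U \<and> N \<in> V}"
      unfolding mem_Collect_eq by (intro exI[of _ "M1+M2"] exI[of _ "N1+N2"]) simp
  next
    fix c X assume "X \<in> {M + N |M N. M \<in> U \<and> N \<in> V}"
    then obtain M1 N1 where h: "X = M1 + N1" "M1 \<in> U" "N1 \<in> V" by blast
    then have c: "M1 \<in> carrier_mat n n" "N1 \<in> carrier_mat n n" using U V by auto
    have "c \<cdot>\<^sub>m X = c \<cdot>\<^sub>m M1 + c \<cdot>\<^sub>m N1" unfolding h(1) using c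
      by (intro eq_matI) (simp_all add: carrier_matD algebra_simps)
    moreover have "c \<cdot>\<^sub>m M1 \<in> U" "c \<cdot>\<^sub>m N1 \<in> V" using h U V by auto
    ultimately show "c \<cdot>\<^sub>m X \<in> {M + N |M N. M \<in> U \<and> N \<in> V}"
      unfolding mem_Collect_eq by (intro exI[of _ "c \<cdot>\<^sub>m M1"] exI[of _ "c \<cdot>\<^sub>m N1"]) simp
  qed
qed

lemma closed_W: "closedsp n (W_space n i)"
  unfolding W_space_def by (auto intro: closed_sum_space closed_diagV)

lemma span_sub:
  assumes "closedsp n S" "T \<subseteq> S" shows "span_mats n T \<subseteq> S"
proof
  fix M assume "M \<in> span_mats n T"
  then obtain L where M: "M = foldr (\<lambda>(c, X) acc. c \<cdot>\<^sub>m X + acc) L (0\<^sub>m n n)" "set (map snd L) \<subseteq> T"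
    unfolding span_mats_def by blast
  have "set (map snd L) \<subseteq> T \<Longrightarrow> foldr (\<lambda>(c, X) acc. c \<cdot>\<^sub>m X + acc) L (0\<^sub>m n n) \<in> S"
  proof (induction L)
    case Nil then show ?case using assms(1) by (simp add: closedsp_def)
  next
    case (Cons p L)
    obtain c X where p: "p = (c, X)" by (cases p)
    have X: "X \<in> S" using Cons.prems p assms(2) by auto
    have acc: "foldr (\<lambda>(c, X) acc. c \<cdot>\<^sub>m X + acc) L (0\<^sub>m n n) \<in> S" using Cons by auto
    have "c \<cdot>\<^sub>m X \<in> S" using X assms(1) unfolding closedsp_def by blast
    then have "c \<cdot>\<^sub>m X + foldr (\<lambda>(c, X) acc. c \<cdot>\<^sub>m X + acc) L (0\<^sub>m n n) \<in> S"
      using acc assms(1) unfolding closedsp_def by blast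
    then show ?case using p by simp
  qed
  then show "M \<in> S" using M by simp
qed

lemma diagV_sub_W: "diagV n (int n - 2 * int i) \<subseteq> W_space n i"
proof
  fix M assume M: "M \<in> diagV n (int n - 2 * int i)"
  have z: "0\<^sub>m n n \<in> diagV n k" for k using closed_diagV[of n k] by (simp add: closedsp_def)
  have "M = M + 0\<^sub>m n n" using M by (auto simp: diagV_def)
  then have s: "M \<in> sum_space (diagV n (int n - 2 * int i)) (diagV n k)" for k
    using M z unfolding sum_space_def by blast
  show "M \<in> W_space n i"
  proof (cases "2 * i < n")
    case True then show ?thesis using s unfolding W_space_def by simp
  next
    case F: False
    show ?thesis
    proof (cases "2 * i > n")
      case True then show ?thesis using s F unfolding W_space_def by simp
    next
      case False
      then have "int n - 2 * int i = 0" using F by simp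
      then have e: "diagV n (int n - 2 * int i) = diagV n 0" by simp
      have "W_space n i = diagV n 0" using F False by (simp add: W_space_def)
      then show ?thesis using M e by simp
    qed
  qed
qed


lemma diag_cases:
  fixes n i m :: int
  assumes "n > 0" "i > 0" "i < n" "- n < n*m - 2*i" "n*m - 2*i < n"
  shows "(2*i < n \<and> (m = 0 \<or> m = 1)) \<or> (2*i > n \<and> (m = 1 \<or> m = 2)) \<or> (2*i = n \<and> m = 1)"
proof -
  have m0: "m \<ge> 0"
  proof (rule ccontr)
    assume "\<not> m \<ge> 0" then have "m \<le> -1" by simp
    then have "n*m \<le> n*(-1)" using assms(1) by (intro mult_left_mono) auto
    then show False using assms by simp
  qed
  have m2: "m \<le> 2"
  proof (rule ccontr)
    assume "\<not> m \<le> 2" then have "m \<ge> 3" by simp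
    then have "n*m \<ge> n*3" using assms(1) by (intro mult_left_mono) auto
    then show False using assms by linarith
  qed
  have "m = 0 \<or> m = 1 \<or> m = 2" using m0 m2 by auto
  then show ?thesis using assms by auto
qed

lemma diagV2_sub_W:
  shows "2 * i < n \<Longrightarrow> diagV n (- 2 * int i) \<subseteq> W_space n i"
    and "2 * i > n \<Longrightarrow> diagV n (2 * int n - 2 * int i) \<subseteq> W_space n i"
proof -
  have z: "0\<^sub>m n n \<in> diagV n k" for k using closed_diagV[of n k] by (simp add: closedsp_def)
  have s: "M \<in> sum_space (diagV n k') (diagV n k)" if "M \<in> diagV n k" for M k k'
  proof -
    have "M = 0\<^sub>m n n + M" using that by (auto simp: diagV_def)
    then show ?thesis using that z unfolding sum_space_def by blast
  qed
  show "2 * i < n \<Longrightarrow> diagV n (- 2 * int i) \<subseteq> W_space n i"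
    using s by (auto simp: W_space_def)
  show "2 * i > n \<Longrightarrow> diagV n (2 * int n - 2 * int i) \<subseteq> W_space n i"
    using s by (auto simp: W_space_def)
qed

lemma word_in_W:
  assumes "n \<ge> 2" "1 \<le> i" "i < n" "gcd n i = 1" "length w = n - 2"
  shows "word_mat n (An n i) (Bn n i) w \<in> W_space n i"
proof -
  let ?M = "word_mat n (An n i) (Bn n i) w"
  define b where "b = length (filter Not w)"
  define d where "d = int (n-2) * int i - int b * int n"
  have ent: "int c = int r + d" if "r < n" "c < n" "?M $$ (r,c) \<noteq> 0" for r c
  proof -
    have "pth n i (int r) w = Some (int c)"
      using that word_entry[of i n r c w] assms by (auto split: if_splits)
    from pth_end[OF this] show ?thesis using assms(5) by (simp add: d_def b_def)
  qed
  have Md: "?M \<in> diagV n d" using ent word_carrier by (auto simp: diagV_def)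
  show ?thesis
  proof (cases "\<exists>r<n. \<exists>c<n. ?M $$ (r,c) \<noteq> 0")
    case False
    then have "?M \<in> diagV n (int n - 2 * int i)" using word_carrier by (auto simp: diagV_def)
    then show ?thesis using diagV_sub_W by blast
  next
    case True
    then obtain r c where rc: "r < n" "c < n" "?M $$ (r,c) \<noteq> 0" by blast
    from ent[OF rc] rc have b1: "- int n < d" "d < int n" by auto
    have deq: "d = int n * (int i - int b) - 2 * int i"
      using assms(1) by (simp add: d_def of_nat_diff algebra_simps)
    have cs: "(2*int i < int n \<and> (int i - int b = 0 \<or> int i - int b = 1)) \<or>
          (2*int i > int n \<and> (int i - int b = 1 \<or> int i - int b = 2)) \<or>
          (2*int i = int n \<and> int i - int b = 1)"
      using diag_cases[of "int n" "int i" "int i - int b"] assms b1 deq by auto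
    show ?thesis
    proof -
      have A: "?M \<in> diagV n (int n - 2 * int i) \<Longrightarrow> ?thesis" using diagV_sub_W by blast
      have B: "2 * i < n \<Longrightarrow> ?M \<in> diagV n (- 2 * int i) \<Longrightarrow> ?thesis" using diagV2_sub_W(1) by blast
      have C: "2 * i > n \<Longrightarrow> ?M \<in> diagV n (2 * int n - 2 * int i) \<Longrightarrow> ?thesis" using diagV2_sub_W(2) by blast
      from cs show ?thesis
      proof (elim disjE conjE)
        assume "2*int i < int n" "int i - int b = 0"
        then show ?thesis using B Md deq by simp
      next
        assume "2*int i < int n" "int i - int b = 1"
        then show ?thesis using A Md deq by simp
      next
        assume "2*int i > int n" "int i - int b = 1"
        then show ?thesis using A Md deq by simp
      next
        assume "2*int i > int n" "int i - int b = 2"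
        then have "d = 2 * int n - 2 * int i" using deq by simp
        then show ?thesis using C Md \<open>2*int i > int n\<close> by simp
      next
        assume "2*int i = int n" "int i - int b = 1"
        then show ?thesis using A Md deq by simp
      qed
    qed
  qed
qed

lemma word_phi:
  assumes "n \<ge> 2" "1 \<le> i" "i < n" "gcd n i = 1" "length w = n - 2"
  shows "word_mat n (An n i) (Bn n i) w $$ (i-1, n-i-1) = word_mat n (An n i) (Bn n i) w $$ (i, n-i)"
proof -
  have hyp: "\<forall>t<length w. (int (i-1) + int t * int i) mod int n \<noteq> int n - int i - 1"
  proof (intro allI impI notI)
    fix t assume t: "t < length w" and eq: "(int (i-1) + int t * int i) mod int n = int n - int i - 1"
    have "(int n - int i - 1) mod int n = int n - int i - 1" using assms by simp
    with eq have "(int (i-1) + int t * int i) mod int n = (int n - int i - 1) mod int n" by simp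
    then have "int n dvd (int (i-1) + int t * int i) - (int n - int i - 1)"
      by (simp add: mod_eq_dvd_iff)
    moreover have "(int (i-1) + int t * int i) - (int n - int i - 1) = int ((t+2)*i) - int n"
      using assms by (simp add: of_nat_diff algebra_simps)
    ultimately have "int n dvd int ((t+2)*i)"
      by (metis dvd_add_left_iff dvd_refl diff_add_cancel)
    then have "n dvd (t+2)*i" by (simp only: int_dvd_int_iff)
    moreover have "coprime n i" using assms(4) by (simp add: coprime_iff_gcd_eq_1)
    ultimately have "n dvd t+2" using coprime_dvd_mult_left_iff by blast
    then have "n \<le> t + 2" by (intro dvd_imp_le) auto
    then show False using t assms by simp
  qed
  have p: "pth n i (int (i-1) + 1) w = map_option (\<lambda>y. y+1) (pth n i (int (i-1)) w)"
    using pth_pair[of i n "int (i-1)" w] assms hyp by simp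
  have e1: "int (i-1) + 1 = int i" "int (n-i-1) + 1 = int (n-i)" using assms by auto
  have "(pth n i (int i) w = Some (int (n-i))) = (pth n i (int (i-1)) w = Some (int (n-i-1)))"
    using p e1 by (cases "pth n i (int (i-1)) w") auto
  then show ?thesis using assms word_entry[of i n "i-1" "n-i-1" w] word_entry[of i n i "n-i" w] by simp
qed


lemma span_phi:
  assumes "n \<ge> 2" "1 \<le> i" "i < n" "gcd n i = 1"
    and "M \<in> span_mats n (words_len n (An n i) (Bn n i) (n - 2))"
  shows "M $$ (i-1, n-i-1) = M $$ (i, n-i)"
proof -
  obtain L where M: "M = foldr (\<lambda>(c, X) acc. c \<cdot>\<^sub>m X + acc) L (0\<^sub>m n n)"
    "set (map snd L) \<subseteq> words_len n (An n i) (Bn n i) (n - 2)"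
    using assms(5) unfolding span_mats_def by blast
  have idx: "i - 1 < n" "n - i - 1 < n" "i < n" "n - i < n" using assms by auto
  have "set (map snd L) \<subseteq> words_len n (An n i) (Bn n i) (n - 2) \<Longrightarrow>
     foldr (\<lambda>(c, X) acc. c \<cdot>\<^sub>m X + acc) L (0\<^sub>m n n) \<in> carrier_mat n n \<and>
     foldr (\<lambda>(c, X) acc. c \<cdot>\<^sub>m X + acc) L (0\<^sub>m n n) $$ (i-1, n-i-1) =
     foldr (\<lambda>(c, X) acc. c \<cdot>\<^sub>m X + acc) L (0\<^sub>m n n) $$ (i, n-i)"
  proof (induction L)
    case Nil then show ?case using idx by simp
  next
    case (Cons p L)
    obtain c X where p: "p = (c, X)" by (cases p)
    have "X \<in> words_len n (An n i) (Bn n i) (n - 2)" using Cons.prems p by auto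
    then obtain w where w: "X = word_mat n (An n i) (Bn n i) w" "length w = n - 2"
      unfolding words_len_def by blast
    have Xc: "X \<in> carrier_mat n n" using w word_carrier by simp
    have Xp: "X $$ (i-1, n-i-1) = X $$ (i, n-i)" using w word_phi assms by simp
    let ?A = "foldr (\<lambda>(c, X) acc. c \<cdot>\<^sub>m X + acc) L (0\<^sub>m n n)"
    have IH: "?A \<in> carrier_mat n n" "?A $$ (i-1, n-i-1) = ?A $$ (i, n-i)" using Cons by auto
    have e: "foldr (\<lambda>(c, X) acc. c \<cdot>\<^sub>m X + acc) (p # L) (0\<^sub>m n n) = c \<cdot>\<^sub>m X + ?A" using p by simp
    show ?case unfolding e using IH Xc Xp idx by (simp add: carrier_matD)
  qed
  then show ?thesis using M by simp
qed

theorem mainTheorem8: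
  fixes n i :: nat
  assumes "n \<ge> 2" and "1 \<le> i" and "i < n" and "gcd n i = 1"
  shows "span_mats n (words_len n (An n i) (Bn n i) (n - 2)) \<subseteq> W_space n i
       \<and> span_mats n (words_len n (An n i) (Bn n i) (n - 2)) \<noteq> W_space n i"
proof
  have "words_len n (An n i) (Bn n i) (n - 2) \<subseteq> W_space n i"
    unfolding words_len_def using word_in_W[OF assms] by auto
  then show "span_mats n (words_len n (An n i) (Bn n i) (n - 2)) \<subseteq> W_space n i"
    using span_sub closed_W by blast
next
  define E :: "complex mat" where "E = mat n n (\<lambda>(r,c). if r = i - 1 \<and> c = n - i - 1 then 1 else 0)"
  have idx: "i - 1 < n" "n - i - 1 < n" "i < n" "n - i < n" using assms by auto
  have "E \<in> diagV n (int n - 2 * int i)"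
    unfolding diagV_def E_def using assms by (auto simp: of_nat_diff)
  then have EW: "E \<in> W_space n i" using diagV_sub_W by blast
  have "E $$ (i-1, n-i-1) \<noteq> E $$ (i, n-i)" using idx assms by (simp add: E_def)
  then have "E \<notin> span_mats n (words_len n (An n i) (Bn n i) (n - 2))"
    using span_phi[OF assms] by blast
  then show "span_mats n (words_len n (An n i) (Bn n i) (n - 2)) \<noteq> W_space n i"
    using EW by blast
qed

end
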